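(* Let $d\ge2$, $L\ge1$, $\sigma>0$, $\lambda>0$. Let $\mu_0^\star$ be uniform on $\mathbb{S}^{d-1}$ and, conditionally on $\mu_0^\star$, let $\mu_1^\star$ have an arbitrary distribution on $\mathbb{S}^{d-1}\cap(\mu_0^\star)^\perp$. Conditionally on $(\mu_0^\star,\mu_1^\star)$, let $(X_\ell,Z_\ell)_{1\le\ell\le L}$ be i.i.d. with $Z_\ell\sim\mathrm{Bernoulli}(1/2)$ and $X_\ell\mid\mu_0^\star,\mu_1^\star,Z_\ell\sim\mathcal{N}(\mu_{Z_\ell}^\star,\sigma^2I_d)$. Then for $c\in\{0,1\}$, $$\mathbb{E}[T^{\mathrm{ctx}}(\mathbb{X})_1\mid\mu_1^\star,\mu_0^\star,Z_1=c]=\frac{2\lambda}{L}\Big[(1+(d+2)\sigma^2)+(L-1)\big(\tfrac12+\sigma^2\big)\Big]\mu_c^\star.$$ In particular, for $\lambda=\frac{L}{2}\cdot\frac{1}{1+(d+2)\sigma^2+(L-1)(\frac12+\sigma^2)}$, this conditional expectation equals $\mu_c^\star$.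
   Context: $\mathbb{X}\in\mathbb{R}^{L\times d}$ has rows $X_1,\dots,X_L$, and the parameter-free attention layer is $T^{\mathrm{ctx}}(\mathbb{X})_\ell=\frac{2\lambda}{L}\sum_{k=1}^L(X_\ell^\top X_k)\,X_k$. *)

theory Defs
  imports "HOL-Probability.Probability"
begin

definition T_ctx :: "real \<Rightarrow> nat \<Rightarrow> (nat \<Rightarrow> real^'d) \<Rightarrow> nat \<Rightarrow> real^'d" where
  "T_ctx lam L X l = (2 * lam / real L) *\<^sub>R (\<Sum>k\<in>{1..L}. (X l \<bullet> X k) *\<^sub>R X k)"

definition gauss_pdf :: "real^'d \<Rightarrow> real \<Rightarrow> real^'d \<Rightarrow> real" where
  "gauss_pdf mu sig x = (\<Prod>i\<in>UNIV. normal_density (mu $ i) sig (x $ i))"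

text \<open>Law of one pair (Z, X): Z ~ Bernoulli(1/2) (True encodes Z = 1, False encodes Z = 0),
  X | Z ~ N(mu_Z, sig^2 I_d).\<close>
definition pair_law :: "real^'d \<Rightarrow> real^'d \<Rightarrow> real \<Rightarrow> (bool \<times> (real^'d)) measure" where
  "pair_law mu0 mu1 sig =
     density (count_space UNIV \<Otimes>\<^sub>M lborel)
       (\<lambda>(z, x). ennreal (1/2 * gauss_pdf (if z then mu1 else mu0) sig x))"

definition sample_law :: "nat \<Rightarrow> real^'d \<Rightarrow> real^'d \<Rightarrow> real \<Rightarrow> (nat \<Rightarrow> bool \<times> (real^'d)) measure" where
  "sample_law L mu0 mu1 sig = PiM {1..L} (\<lambda>_. pair_law mu0 mu1 sig)"

definition cond_exp_event :: "'a measure \<Rightarrow> 'a set \<Rightarrow> ('a \<Rightarrow> 'b::{banach, second_countable_topology}) \<Rightarrow> 'b" where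
  "cond_exp_event M E f = (1 / measure M E) *\<^sub>R (LINT w:E|M. f w)"

end

theory Submission
  imports Defs
begin


definition mom :: "real \<Rightarrow> real \<Rightarrow> nat \<Rightarrow> real" where
  "mom sig m k = (if k = 0 then 1 else if k = 1 then m else if k = 2 then m^2 + sig^2 else m^3 + 3 * m * sig^2)"

lemma nd_moment:
  assumes sig: "sig > 0" and k: "k \<le> 3"
  shows "has_bochner_integral lborel (\<lambda>t. normal_density m sig t * t^k) (mom sig m k)"
proof -
  have h0: "has_bochner_integral lborel (\<lambda>t. normal_density m sig t) 1"
    using integrable_normal_density[OF sig, of m] integral_normal_density[OF sig, of m]
    by (metis has_bochner_integral_integrable)
  have h1: "has_bochner_integral lborel (\<lambda>t. normal_density m sig t * (t - m)) 0"
    using normal_moment_odd[OF sig, where k=0 and \<mu>=m] by simp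
  have h2: "has_bochner_integral lborel (\<lambda>t. normal_density m sig t * (t - m)^2) (sig^2)"
    using normal_moment_even[OF sig, where k=1 and \<mu>=m] by simp
  have h3: "has_bochner_integral lborel (\<lambda>t. normal_density m sig t * (t - m)^3) 0"
    using normal_moment_odd[OF sig, where k=1 and \<mu>=m] by (simp add: numeral_3_eq_3)
  have "k = 0 \<or> k = 1 \<or> k = 2 \<or> k = 3" using k by auto
  then show ?thesis
  proof (elim disjE)
    assume "k = 0" then show ?thesis using h0 by (simp add: mom_def)
  next
    assume "k = 1"
    have "has_bochner_integral lborel (\<lambda>t. normal_density m sig t * (t - m) + m * normal_density m sig t) (0 + m * 1)"
      by (intro has_bochner_integral_add has_bochner_integral_mult_right h0 h1)
    then show ?thesis using \<open>k = 1\<close>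
      by (simp add: mom_def algebra_simps)
  next
    assume "k = 2"
    have "has_bochner_integral lborel (\<lambda>t. normal_density m sig t * (t - m)^2 + (2 * m) * (normal_density m sig t * (t - m)) + m^2 * normal_density m sig t) (sig^2 + (2 * m) * 0 + m^2 * 1)"
      by (intro has_bochner_integral_add has_bochner_integral_mult_right h0 h1 h2)
    moreover have "\<And>t. normal_density m sig t * (t - m)^2 + (2 * m) * (normal_density m sig t * (t - m)) + m^2 * normal_density m sig t = normal_density m sig t * t^2"
      by (simp add: algebra_simps power2_eq_square)
    ultimately show ?thesis using \<open>k = 2\<close>
      by (simp add: mom_def algebra_simps)
  next
    assume "k = 3"
    have "has_bochner_integral lborel (\<lambda>t. normal_density m sig t * (t - m)^3 + (3 * m) * (normal_density m sig t * (t - m)^2) + (3 * m^2) * (normal_density m sig t * (t - m)) + m^3 * normal_density m sig t) (0 + (3 * m) * sig^2 + (3 * m^2) * 0 + m^3 * 1)"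
      by (intro has_bochner_integral_add has_bochner_integral_mult_right h0 h1 h2 h3)
    moreover have "\<And>t. normal_density m sig t * (t - m)^3 + (3 * m) * (normal_density m sig t * (t - m)^2) + (3 * m^2) * (normal_density m sig t * (t - m)) + m^3 * normal_density m sig t = normal_density m sig t * t^3"
      by (simp add: algebra_simps power2_eq_square power3_eq_cube)
    ultimately show ?thesis using \<open>k = 3\<close>
      by (simp add: mom_def algebra_simps)
  qed
qed



definition ind :: "real^'d \<Rightarrow> 'd" where "ind b = (SOME i. b = axis i 1)"

lemma ind_axis[simp]: "ind (axis i 1 :: real^'d) = i"
  unfolding ind_def by (rule some_equality) (auto simp: axis_eq_axis)

lemma Basis_vec_real: "(Basis :: (real^'d) set) = range (\<lambda>i. axis i 1)"
  by (auto simp: Basis_vec_def)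

lemma T_nth: "(\<Sum>b\<in>(Basis :: (real^'d) set). f b *\<^sub>R b) $ i = f (axis i 1)"
proof -
  have "(\<Sum>b\<in>(Basis :: (real^'d) set). f b *\<^sub>R b) $ i = (\<Sum>b\<in>Basis. f b *\<^sub>R b) \<bullet> axis i 1"
    by (simp add: inner_axis)
  also have "\<dots> = f (axis i 1)"
    by (simp add: inner_sum_left inner_Basis if_distrib cong: if_cong)
  finally show ?thesis .
qed

lemma T_nth': "(\<Sum>b\<in>(Basis :: (real^'d) set). f b * b $ i) = f (axis i 1)"
  using T_nth[of f i] by simp

lemma gauss_pdf_nonneg: "gauss_pdf mu sig x \<ge> 0"
  unfolding gauss_pdf_def by (simp add: prod_nonneg)

lemma gauss_pdf_measurable[measurable]: "gauss_pdf mu sig \<in> borel_measurable borel"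
  unfolding gauss_pdf_def by measurable

lemma gauss_moment:
  fixes mu :: "real^'d" and n :: "'d \<Rightarrow> nat"
  assumes sig: "sig > 0" and n: "\<And>i. n i \<le> 3"
  shows "has_bochner_integral lborel (\<lambda>x. gauss_pdf mu sig x * (\<Prod>i\<in>UNIV. (x$i)^(n i)))
           (\<Prod>i\<in>UNIV. mom sig (mu$i) (n i))"
proof -
  interpret P: product_sigma_finite "\<lambda>_::real^'d. lborel :: real measure"
    by (simp add: product_sigma_finite_def lborel.sigma_finite_measure_axioms)
  define G where "G = (\<lambda>(b::real^'d) t. normal_density (mu $ ind b) sig t * t ^ (n (ind b)))"
  have Gi: "integrable lborel (G b)" for b
    unfolding G_def using nd_moment[OF sig n, of "mu $ ind b" "ind b"] by (simp add: has_bochner_integral_iff)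
  have eqf: "(\<lambda>x. gauss_pdf mu sig x * (\<Prod>i\<in>UNIV. (x$i)^(n i))) (\<Sum>b\<in>Basis. f b *\<^sub>R b) = (\<Prod>b\<in>Basis. G b (f b))" for f
  proof -
    have "(\<Prod>b\<in>Basis. G b (f b)) = (\<Prod>i\<in>UNIV. G (axis i 1) (f (axis i 1)))"
      unfolding Basis_vec_real by (subst prod.reindex) (auto simp: inj_on_def axis_eq_axis)
    then show ?thesis
      by (simp add: G_def T_nth T_nth' gauss_pdf_def prod.distrib)
  qed
  have "has_bochner_integral (\<Pi>\<^sub>M b\<in>Basis. lborel) (\<lambda>f. \<Prod>b\<in>Basis. G b (f b)) (\<Prod>b\<in>Basis. integral\<^sup>L lborel (G b))"
    using P.product_integral_prod[of Basis G] P.product_integrable_prod[of Basis G] Gi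
    by (simp add: has_bochner_integral_iff)
  moreover have "(\<Prod>b\<in>Basis. integral\<^sup>L lborel (G b)) = (\<Prod>i\<in>UNIV. mom sig (mu$i) (n i))"
  proof -
    have "(\<Prod>b\<in>Basis. integral\<^sup>L lborel (G b)) = (\<Prod>i\<in>UNIV. integral\<^sup>L lborel (G (axis i 1)))"
      unfolding Basis_vec_real by (subst prod.reindex) (auto simp: inj_on_def axis_eq_axis)
    also have "\<dots> = (\<Prod>i\<in>UNIV. mom sig (mu$i) (n i))"
      using nd_moment[OF sig n] by (intro prod.cong refl) (simp add: G_def has_bochner_integral_iff)
    finally show ?thesis .
  qed
  ultimately have "has_bochner_integral (\<Pi>\<^sub>M b\<in>Basis. lborel) (\<lambda>f. (\<lambda>x. gauss_pdf mu sig x * (\<Prod>i\<in>UNIV. (x$i)^(n i))) (\<Sum>b\<in>Basis. f b *\<^sub>R b)) (\<Prod>i\<in>UNIV. mom sig (mu$i) (n i))"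
    by (simp only: eqf)
  then have "has_bochner_integral (distr (\<Pi>\<^sub>M b\<in>Basis. lborel) borel (\<lambda>f. \<Sum>b\<in>Basis. f b *\<^sub>R b)) (\<lambda>x. gauss_pdf mu sig x * (\<Prod>i\<in>UNIV. (x$i)^(n i))) (\<Prod>i\<in>UNIV. mom sig (mu$i) (n i))"
    by (intro has_bochner_integral_distr) auto
  then show ?thesis by (simp add: lborel_eq[symmetric])
qed

lemma pow_if0: "(x::real) ^ (if c then a else 0) = (if c then x ^ a else 1)"
  by simp

lemma prod_two:
  fixes F :: "'d::finite \<Rightarrow> nat \<Rightarrow> real"
  assumes "\<And>m. F m 0 = 1"
  shows "(\<Prod>m\<in>UNIV. F m ((if m = j then a else 0) + (if m = i then b else 0)))
        = (if i = j then F j (a + b) else F j a * F i b)"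
proof (cases "i = j")
  case True
  have "(\<Prod>m\<in>UNIV. F m ((if m = j then a else 0) + (if m = i then b else 0))) = (\<Prod>m\<in>UNIV. if m = j then F j (a + b) else 1)"
    using True assms by (intro prod.cong) auto
  then show ?thesis using True by simp
next
  case False
  have "(\<Prod>m\<in>UNIV. F m ((if m = j then a else 0) + (if m = i then b else 0))) = (\<Prod>m\<in>UNIV. (if m = j then F j a else 1) * (if m = i then F i b else 1))"
    using False assms by (intro prod.cong) auto
  then show ?thesis using False by (simp add: prod.distrib)
qed

lemma gauss_ab:
  fixes mu :: "real^'d"
  assumes sig: "sig > 0" and ab: "a + b \<le> 3"
  shows "has_bochner_integral lborel (\<lambda>x. gauss_pdf mu sig x * ((x$j)^a * (x$i)^b))
           (if i = j then mom sig (mu$j) (a + b) else mom sig (mu$j) a * mom sig (mu$i) b)"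
proof -
  define n where "n = (\<lambda>m. (if m = j then a else 0) + (if m = i then b else 0))"
  have n: "n m \<le> 3" for m using ab by (auto simp: n_def)
  have e1: "(\<Prod>m\<in>UNIV. (x$m)^(n m)) = (x$j)^a * (x$i)^b" for x :: "real^'d"
    by (simp add: n_def power_add prod.distrib pow_if0)
  have e2: "(\<Prod>m\<in>UNIV. mom sig (mu$m) (n m)) = (if i = j then mom sig (mu$j) (a + b) else mom sig (mu$j) a * mom sig (mu$i) b)"
    unfolding n_def by (rule prod_two[where F="\<lambda>m k. mom sig (mu$m) k"]) (simp add: mom_def)
  show ?thesis using gauss_moment[where n=n and mu=mu, OF sig n] by (simp only: e1 e2)
qed



lemma meas_bool_split:
  fixes h :: "bool \<Rightarrow> real^'d \<Rightarrow> real"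
  assumes [measurable]: "h True \<in> borel_measurable borel" "h False \<in> borel_measurable borel"
  shows "(\<lambda>p. h (fst p) (snd p)) \<in> borel_measurable (count_space UNIV \<Otimes>\<^sub>M lborel)"
proof -
  have "(\<lambda>p. h (fst p) (snd p)) = (\<lambda>p. if fst p then h True (snd p) else h False (snd p))"
    by (auto simp: fun_eq_iff)
  moreover have "(\<lambda>p::bool \<times> (real^'d). if fst p then h True (snd p) else h False (snd p)) \<in> borel_measurable (count_space UNIV \<Otimes>\<^sub>M lborel)"
    by measurable
  ultimately show ?thesis by simp
qed

lemma pair_law_alt: "pair_law mu0 mu1 sig = density (count_space UNIV \<Otimes>\<^sub>M lborel)
   (\<lambda>p. ennreal (1/2 * gauss_pdf (if fst p then mu1 else mu0) sig (snd p)))"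
  unfolding pair_law_def by (simp add: case_prod_beta')

lemma pair_integral:
  fixes h :: "bool \<Rightarrow> real^'d \<Rightarrow> real" and mu0 mu1 :: "real^'d"
  assumes [measurable]: "h True \<in> borel_measurable borel" "h False \<in> borel_measurable borel"
    and i0: "integrable lborel (\<lambda>x. gauss_pdf mu0 sig x * h False x)"
    and i1: "integrable lborel (\<lambda>x. gauss_pdf mu1 sig x * h True x)"
  shows "integrable (pair_law mu0 mu1 sig) (\<lambda>p. h (fst p) (snd p))"
    and "(\<integral>p. h (fst p) (snd p) \<partial>pair_law mu0 mu1 sig)
          = 1/2 * ((\<integral>x. gauss_pdf mu0 sig x * h False x \<partial>lborel) + (\<integral>x. gauss_pdf mu1 sig x * h True x \<partial>lborel))"
proof -
  interpret C: sigma_finite_measure "count_space (UNIV::bool set)"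
    by (rule sigma_finite_measure_count_space_finite) simp
  interpret PS: pair_sigma_finite "count_space (UNIV::bool set)" "lborel :: (real^'d) measure"
    by standard
  define g where "g = (\<lambda>p::bool \<times> (real^'d). 1/2 * gauss_pdf (if fst p then mu1 else mu0) sig (snd p))"
  have gm[measurable]: "g \<in> borel_measurable (count_space UNIV \<Otimes>\<^sub>M lborel)"
    unfolding g_def using meas_bool_split[of "\<lambda>z. gauss_pdf (if z then mu1 else mu0) sig"] by simp
  have hm[measurable]: "(\<lambda>p. h (fst p) (snd p)) \<in> borel_measurable (count_space UNIV \<Otimes>\<^sub>M lborel)"
    by (rule meas_bool_split) simp_all
  have gnn: "AE p in count_space UNIV \<Otimes>\<^sub>M lborel. 0 \<le> g p"
    by (simp add: g_def gauss_pdf_nonneg)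
  have PL: "pair_law mu0 mu1 sig = density (count_space UNIV \<Otimes>\<^sub>M lborel) g"
    unfolding pair_law_alt g_def ..
  define F where "F = (\<lambda>p. g p *\<^sub>R h (fst p) (snd p))"
  have Fm[measurable]: "F \<in> borel_measurable (count_space UNIV \<Otimes>\<^sub>M lborel)"
    unfolding F_def by measurable
  have Fz: "integrable lborel (\<lambda>x. F (z, x))" for z
    using i0 i1 by (cases z) (auto simp: F_def g_def)
  have FI: "integrable (count_space UNIV \<Otimes>\<^sub>M lborel) F"
    by (rule PS.Fubini_integrable) (auto intro: integrable_count_space Fz)
  show "integrable (pair_law mu0 mu1 sig) (\<lambda>p. h (fst p) (snd p))"
    unfolding PL using FI gnn by (subst integrable_density) (auto simp: F_def)
  have "(\<integral>p. h (fst p) (snd p) \<partial>pair_law mu0 mu1 sig) = integral\<^sup>L (count_space UNIV \<Otimes>\<^sub>M lborel) F"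
    unfolding PL F_def by (rule integral_density) (auto simp: gnn)
  also have "\<dots> = (\<integral>z. (\<integral>x. F (z, x) \<partial>lborel) \<partial>count_space UNIV)"
    using PS.integral_fst'[OF FI] by simp
  also have "\<dots> = (\<Sum>z\<in>UNIV. (\<integral>x. F (z, x) \<partial>lborel))"
    by (rule lebesgue_integral_count_space_finite) simp
  also have "\<dots> = 1/2 * ((\<integral>x. gauss_pdf mu0 sig x * h False x \<partial>lborel) + (\<integral>x. gauss_pdf mu1 sig x * h True x \<partial>lborel))"
    by (simp add: UNIV_bool F_def g_def algebra_simps)
  finally show "(\<integral>p. h (fst p) (snd p) \<partial>pair_law mu0 mu1 sig)
          = 1/2 * ((\<integral>x. gauss_pdf mu0 sig x * h False x \<partial>lborel) + (\<integral>x. gauss_pdf mu1 sig x * h True x \<partial>lborel))" .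
qed



definition qf :: "(bool \<Rightarrow> real) \<Rightarrow> nat \<Rightarrow> nat \<Rightarrow> 'd \<Rightarrow> 'd \<Rightarrow> bool \<times> (real^'d) \<Rightarrow> real" where
  "qf wt a b j i p = wt (fst p) * ((snd p $ j)^a * (snd p $ i)^b)"

definition GM :: "real \<Rightarrow> real^'d \<Rightarrow> nat \<Rightarrow> nat \<Rightarrow> 'd \<Rightarrow> 'd \<Rightarrow> real" where
  "GM sig mu a b j i = (if i = j then mom sig (mu$j) (a + b) else mom sig (mu$j) a * mom sig (mu$i) b)"

lemma Qmom:
  fixes mu0 mu1 :: "real^'d"
  assumes sig: "sig > 0" and ab: "a + b \<le> 3"
  shows "integrable (pair_law mu0 mu1 sig) (qf wt a b j i)"
    and "(\<integral>p. qf wt a b j i p \<partial>pair_law mu0 mu1 sig) = 1/2 * (wt False * GM sig mu0 a b j i + wt True * GM sig mu1 a b j i)"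
proof -
  define h where "h = (\<lambda>z (x::real^'d). wt z * ((x $ j)^a * (x $ i)^b))"
  have qh: "qf wt a b j i = (\<lambda>p. h (fst p) (snd p))"
    by (simp add: qf_def h_def fun_eq_iff)
  have hm: "h z \<in> borel_measurable borel" for z
    unfolding h_def by measurable
  have g: "has_bochner_integral lborel (\<lambda>x. gauss_pdf mu sig x * h z x) (wt z * GM sig mu a b j i)" for mu z
  proof -
    have "has_bochner_integral lborel (\<lambda>x. wt z * (gauss_pdf mu sig x * ((x$j)^a * (x$i)^b))) (wt z * GM sig mu a b j i)"
      unfolding GM_def by (intro has_bochner_integral_mult_right gauss_ab[OF sig ab])
    then show ?thesis by (simp add: h_def algebra_simps)
  qed
  note PI = pair_integral[of h mu0 sig mu1, OF hm hm]
  show "integrable (pair_law mu0 mu1 sig) (qf wt a b j i)"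
    unfolding qh using PI(1) g by (auto simp: has_bochner_integral_iff)
  show "(\<integral>p. qf wt a b j i p \<partial>pair_law mu0 mu1 sig) = 1/2 * (wt False * GM sig mu0 a b j i + wt True * GM sig mu1 a b j i)"
    unfolding qh using PI(2) g by (auto simp: has_bochner_integral_iff)
qed

lemma prob_Q:
  fixes mu0 mu1 :: "real^'d"
  assumes sig: "sig > 0"
  shows "prob_space (pair_law mu0 mu1 sig)"
proof
  let ?Q = "pair_law mu0 mu1 sig"
  have e: "qf (\<lambda>_. 1) 0 0 j j = (\<lambda>_. 1)" for j :: 'd by (simp add: qf_def fun_eq_iff)
  have I: "integrable ?Q (\<lambda>_. 1::real)" and V: "(\<integral>p. 1 \<partial>?Q) = (1::real)"
    using Qmom[OF sig, of 0 0 mu0 mu1 "\<lambda>_. 1" undefined undefined] by (simp_all add: e GM_def mom_def)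
  have fin: "emeasure ?Q (space ?Q) \<noteq> \<top>"
    using I by (simp add: integrable_iff_bounded nn_integral_const less_top)
  have "measure ?Q (space ?Q) = 1" using V by simp
  then show "emeasure ?Q (space ?Q) = 1"
    using fin by (simp add: emeasure_eq_ennreal_measure)
qed



lemma pi_two:
  fixes Q :: "'a measure" and A B :: "'a \<Rightarrow> real"
  assumes Q: "prob_space Q" and I: "finite I" "a \<in> I" "b \<in> I" "a \<noteq> b"
    and iA: "integrable Q A" and iB: "integrable Q B"
  shows "integrable (PiM I (\<lambda>_. Q)) (\<lambda>w. A (w a) * B (w b))"
    and "(\<integral>w. A (w a) * B (w b) \<partial>PiM I (\<lambda>_. Q)) = integral\<^sup>L Q A * integral\<^sup>L Q B"
proof -
  interpret PS: product_sigma_finite "\<lambda>_::'i. Q"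
    using Q by (simp add: product_sigma_finite_def prob_space_imp_sigma_finite)
  interpret prob_space Q by (rule Q)
  define f where "f = (\<lambda>m. if m = a then A else if m = b then B else (\<lambda>_. 1::real))"
  have fi: "integrable Q (f m)" for m using iA iB by (simp add: f_def)
  have pe: "(\<Prod>m\<in>I. f m (w m)) = A (w a) * B (w b)" for w
  proof -
    have "(\<Prod>m\<in>I. f m (w m)) = (\<Prod>m\<in>I. (if m = a then A (w a) else 1) * (if m = b then B (w b) else 1))"
      using I by (intro prod.cong) (auto simp: f_def)
    then show ?thesis using I by (simp add: prod.distrib)
  qed
  have pv: "(\<Prod>m\<in>I. integral\<^sup>L Q (f m)) = integral\<^sup>L Q A * integral\<^sup>L Q B"
  proof -
    have "(\<Prod>m\<in>I. integral\<^sup>L Q (f m)) = (\<Prod>m\<in>I. (if m = a then integral\<^sup>L Q A else 1) * (if m = b then integral\<^sup>L Q B else 1))"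
      using I by (intro prod.cong) (auto simp: f_def prob_space)
    then show ?thesis using I by (simp add: prod.distrib)
  qed
  show "integrable (PiM I (\<lambda>_. Q)) (\<lambda>w. A (w a) * B (w b))"
    using PS.product_integrable_prod[of I f] I fi by (simp add: pe)
  show "(\<integral>w. A (w a) * B (w b) \<partial>PiM I (\<lambda>_. Q)) = integral\<^sup>L Q A * integral\<^sup>L Q B"
    using PS.product_integral_prod[of I f] I fi by (simp add: pe pv)
qed

lemma pi_one:
  fixes Q :: "'a measure" and A :: "'a \<Rightarrow> real"
  assumes Q: "prob_space Q" and I: "finite I" "a \<in> I"
    and iA: "integrable Q A"
  shows "integrable (PiM I (\<lambda>_. Q)) (\<lambda>w. A (w a))"
    and "(\<integral>w. A (w a) \<partial>PiM I (\<lambda>_. Q)) = integral\<^sup>L Q A"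
proof -
  interpret PS: product_sigma_finite "\<lambda>_::'i. Q"
    using Q by (simp add: product_sigma_finite_def prob_space_imp_sigma_finite)
  interpret prob_space Q by (rule Q)
  define f where "f = (\<lambda>m. if m = a then A else (\<lambda>_. 1::real))"
  have fi: "integrable Q (f m)" for m using iA by (simp add: f_def)
  have pe: "(\<Prod>m\<in>I. f m (w m)) = A (w a)" for w
  proof -
    have "(\<Prod>m\<in>I. f m (w m)) = (\<Prod>m\<in>I. (if m = a then A (w a) else 1))"
      using I by (intro prod.cong) (auto simp: f_def)
    then show ?thesis using I by simp
  qed
  have pv: "(\<Prod>m\<in>I. integral\<^sup>L Q (f m)) = integral\<^sup>L Q A"
  proof -
    have "(\<Prod>m\<in>I. integral\<^sup>L Q (f m)) = (\<Prod>m\<in>I. (if m = a then integral\<^sup>L Q A else 1))"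
      using I by (intro prod.cong) (auto simp: f_def prob_space)
    then show ?thesis using I by simp
  qed
  show "integrable (PiM I (\<lambda>_. Q)) (\<lambda>w. A (w a))"
    using PS.product_integrable_prod[of I f] I fi by (simp add: pe)
  show "(\<integral>w. A (w a) \<partial>PiM I (\<lambda>_. Q)) = integral\<^sup>L Q A"
    using PS.product_integral_prod[of I f] I fi by (simp add: pe pv)
qed



lemma GM21: "GM sig m 2 1 j i = ((m$j)^2 + sig^2) * m$i + (if i = j then 2 * sig^2 * m$j else 0)"
  by (simp add: GM_def mom_def power2_eq_square power3_eq_cube algebra_simps)

lemma GM11: "GM sig m 1 1 j i = m$j * m$i + (if i = j then sig^2 else 0)"
  by (simp add: GM_def mom_def power2_eq_square)

lemma GM10: "GM sig m 1 0 j j = m$j"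
  by (simp add: GM_def mom_def)

lemma GM00: "GM sig m 0 0 j j = 1"
  by (simp add: GM_def mom_def)

lemma sumA:
  fixes m :: "real^'d"
  assumes "norm m = 1"
  shows "(\<Sum>j\<in>UNIV. GM sig m 2 1 j i) = (1 + (real CARD('d) + 2) * sig^2) * m$i"
proof -
  have mm: "(\<Sum>j\<in>UNIV. (m$j)^2) = 1"
    using assms power2_norm_eq_inner[of m] by (simp add: inner_vec_def power2_eq_square)
  have "(\<Sum>j\<in>UNIV. GM sig m 2 1 j i) = (\<Sum>j\<in>UNIV. (m$j)^2) * m$i + real CARD('d) * sig^2 * m$i + 2 * sig^2 * m$i"
    unfolding GM21 by (simp add: sum.distrib sum_distrib_right sum_distrib_left algebra_simps)
  then show ?thesis using mm by (simp add: algebra_simps)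
qed

lemma sumB:
  fixes m mu0 mu1 :: "real^'d"
  shows "(\<Sum>j\<in>UNIV. m$j * (GM sig mu0 1 1 j i + GM sig mu1 1 1 j i)) = (m \<bullet> mu0) * mu0$i + (m \<bullet> mu1) * mu1$i + 2 * sig^2 * m$i"
proof -
  have "(\<Sum>j\<in>UNIV. m$j * (GM sig mu0 1 1 j i + GM sig mu1 1 1 j i))
     = (\<Sum>j\<in>UNIV. m$j * mu0$j * mu0$i + m$j * mu1$j * mu1$i + (if j = i then 2 * sig^2 * m$i else 0))"
    unfolding GM11 by (intro sum.cong) (auto simp: algebra_simps)
  also have "\<dots> = (m \<bullet> mu0) * mu0$i + (m \<bullet> mu1) * mu1$i + 2 * sig^2 * m$i"
    by (simp add: sum.distrib inner_vec_def sum_distrib_right)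
  finally show ?thesis .
qed

lemma vec_axis_sum: "(\<Sum>i\<in>UNIV. a i *\<^sub>R axis i (1::real)) $ k = a k"
  by (simp add: axis_def if_distrib cong: if_cong)



lemma GM10s: "GM sig m (Suc 0) 0 j j = m$j"
  by (simp add: GM_def mom_def)

theorem proposition5:
  fixes mu0 mu1 :: "real^'d" and L :: nat and sig lam :: real and c :: bool
  assumes "CARD('d) \<ge> 2" and "L \<ge> 1" and "sig > 0" and "lam > 0"
    and "norm mu0 = 1" and "norm mu1 = 1" and "mu0 \<bullet> mu1 = 0"
  defines "P \<equiv> sample_law L mu0 mu1 sig"
    and "E \<equiv> {w \<in> space (sample_law L mu0 mu1 sig). fst (w 1) = c}"
    and "mu_c \<equiv> (if c then mu1 else mu0)"
  shows "(cond_exp_event P E (\<lambda>w. T_ctx lam L (\<lambda>l. snd (w l)) 1)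
           = (2 * lam / real L) *\<^sub>R
               (((1 + (real CARD('d) + 2) * sig^2) + (real L - 1) * (1/2 + sig^2)) *\<^sub>R mu_c))
       \<and> (lam = real L / 2 * (1 / (1 + (real CARD('d) + 2) * sig^2 + (real L - 1) * (1/2 + sig^2)))
         \<longrightarrow> cond_exp_event P E (\<lambda>w. T_ctx lam L (\<lambda>l. snd (w l)) 1) = mu_c)"
proof -
  note sig = \<open>sig > 0\<close>
  define Q where "Q = pair_law mu0 mu1 sig"
  define I where "I = {1..L}"
  have PQ: "P = PiM I (\<lambda>_. Q)" unfolding P_def sample_law_def Q_def I_def ..
  have QP: "prob_space Q" unfolding Q_def by (rule prob_Q[OF sig])
  have I: "finite I" "1 \<in> I" using \<open>L \<ge> 1\<close> by (auto simp: I_def)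
  define wc where "wc = (\<lambda>z. if z = c then 1 else (0::real))"
  define one where "one = (\<lambda>z::bool. 1::real)"
  have wcsum: "wc False * GM sig mu0 a b j i + wc True * GM sig mu1 a b j i = GM sig mu_c a b j i" for a b j i
    by (cases c) (simp_all add: wc_def mu_c_def)
  have ind: "indicator E w = qf wc 0 0 j j (w 1)" if "w \<in> space P" for w and j :: 'd
    using that by (simp add: E_def P_def qf_def wc_def indicator_def)
  have mE: "measure P E = 1/2"
  proof -
    fix j :: 'd
    have "measure P E = (\<integral>w. indicator E w \<partial>P)"
      by (simp add: E_def P_def Int_absorb2)
    also have "\<dots> = (\<integral>w. qf wc 0 0 j j (w 1) \<partial>P)"
      by (rule Bochner_Integration.integral_cong[OF refl]) (rule ind)
    also have "\<dots> = 1/2"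
      unfolding PQ using pi_one(2)[OF QP I, of "qf wc 0 0 j j"] Qmom[OF sig, of 0 0 mu0 mu1 wc j j]
      by (simp add: Q_def wcsum GM00 wc_def)
    finally show ?thesis .
  qed
  define c0 where "c0 = 2 * lam / real L"
  define trm where "trm = (\<lambda>(k::nat) (j::'d) (i::'d) (w::nat \<Rightarrow> bool \<times> (real^'d)). if k = 1 then qf wc 2 1 j i (w 1) else qf wc 1 0 j j (w 1) * qf one 1 1 j i (w k))"
  define val where "val = (\<lambda>(k::nat) (j::'d) (i::'d). if k = 1 then 1/2 * GM sig mu_c 2 1 j i
      else (1/2 * GM sig mu_c 1 0 j j) * (1/2 * (GM sig mu0 1 1 j i + GM sig mu1 1 1 j i)))"
  have tint: "integrable P (trm k j i) \<and> integral\<^sup>L P (trm k j i) = val k j i" if "k \<in> I" for k j i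
  proof (cases "k = 1")
    case True
    then show ?thesis
      unfolding PQ trm_def val_def
      using pi_one[OF QP I, of "qf wc 2 1 j i"] Qmom[OF sig, of 2 1 mu0 mu1 wc j i]
      by (simp add: Q_def wcsum trm_def val_def)
  next
    case False
    have te: "trm k j i = (\<lambda>w. qf wc 1 0 j j (w 1) * qf one 1 1 j i (w k))"
      using False by (simp add: trm_def fun_eq_iff)
    have ve: "val k j i = (1/2 * GM sig mu_c 1 0 j j) * (1/2 * (GM sig mu0 1 1 j i + GM sig mu1 1 1 j i))"
      using False by (simp add: val_def)
    have k1: "1 \<noteq> k" using False by simp
    note pt = pi_two[OF QP I(1,2) that k1, of "qf wc 1 0 j j" "qf one 1 1 j i"]
    have ab10: "(1::nat) + 0 \<le> 3" and ab11: "(1::nat) + 1 \<le> 3" by simp_all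
    note q1 = Qmom[OF sig ab10, of mu0 mu1 wc j j]
    note q2 = Qmom[OF sig ab11, of mu0 mu1 one j i]
    have v1: "integral\<^sup>L Q (qf wc 1 0 j j) = 1/2 * GM sig mu_c 1 0 j j"
      using q1(2) unfolding Q_def wcsum .
    have v2: "integral\<^sup>L Q (qf one 1 1 j i) = 1/2 * (GM sig mu0 1 1 j i + GM sig mu1 1 1 j i)"
      using q2(2) unfolding Q_def one_def by simp
    have i1: "integrable Q (qf wc 1 0 j j)" using q1(1) unfolding Q_def .
    have i2: "integrable Q (qf one 1 1 j i)" using q2(1) unfolding Q_def .
    show ?thesis
      unfolding PQ te ve by (intro conjI pt(1)[OF i1 i2]) (simp only: pt(2)[OF i1 i2] v1 v2)
  qed
  have pw: "indicator E w *\<^sub>R T_ctx lam L (\<lambda>l. snd (w l)) 1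
      = (\<Sum>i\<in>UNIV. (\<Sum>k\<in>I. \<Sum>j\<in>UNIV. c0 * trm k j i w) *\<^sub>R axis i 1)" if w: "w \<in> space P" for w
  proof (subst vec_eq_iff, intro allI)
    fix i
    have "(indicator E w *\<^sub>R T_ctx lam L (\<lambda>l. snd (w l)) 1) $ i
        = (\<Sum>k\<in>I. \<Sum>j\<in>UNIV. c0 * (wc (fst (w 1)) * (snd (w 1) $ j * snd (w k) $ j * snd (w k) $ i)))"
      using ind[OF w] by (simp add: T_ctx_def c0_def I_def inner_vec_def qf_def sum_distrib_left sum_distrib_right algebra_simps)
    also have "\<dots> = (\<Sum>k\<in>I. \<Sum>j\<in>UNIV. c0 * trm k j i w)"
      by (intro sum.cong refl) (auto simp: trm_def qf_def one_def power2_eq_square algebra_simps)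
    finally show "(indicator E w *\<^sub>R T_ctx lam L (\<lambda>l. snd (w l)) 1) $ i = (\<Sum>i\<in>UNIV. (\<Sum>k\<in>I. \<Sum>j\<in>UNIV. c0 * trm k j i w) *\<^sub>R axis i 1) $ i"
      by (simp only: vec_axis_sum)
  qed
  have LI: "(LINT w:E|P. T_ctx lam L (\<lambda>l. snd (w l)) 1) = (\<Sum>i\<in>UNIV. (\<Sum>k\<in>I. \<Sum>j\<in>UNIV. c0 * val k j i) *\<^sub>R axis i 1)"
  proof -
    have "(LINT w:E|P. T_ctx lam L (\<lambda>l. snd (w l)) 1) = (\<integral>w. (\<Sum>i\<in>UNIV. (\<Sum>k\<in>I. \<Sum>j\<in>UNIV. c0 * trm k j i w) *\<^sub>R axis i 1) \<partial>P)"
      unfolding set_lebesgue_integral_def by (rule Bochner_Integration.integral_cong[OF refl]) (rule pw)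
    also have "\<dots> = (\<Sum>i\<in>UNIV. (\<Sum>k\<in>I. \<Sum>j\<in>UNIV. c0 * val k j i) *\<^sub>R axis i 1)"
      using tint I(1) by (simp add: integral_sum integral_mult_right)
    finally show ?thesis .
  qed
  define K where "K = (1 + (real CARD('d) + 2) * sig^2) + (real L - 1) * (1/2 + sig^2)"
  have nmc: "norm mu_c = 1" using assms(5,6) by (simp add: mu_c_def)
  have orth: "(mu_c \<bullet> mu0) * mu0$i + (mu_c \<bullet> mu1) * mu1$i = mu_c$i" for i
  proof -
    have "mu0 \<bullet> mu0 = 1" "mu1 \<bullet> mu1 = 1" using assms(5,6) power2_norm_eq_inner[of mu0] power2_norm_eq_inner[of mu1] by simp_all
    moreover have "mu1 \<bullet> mu0 = 0" using assms(7) by (simp add: inner_commute)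
    ultimately show ?thesis using assms(7) by (cases c) (simp_all add: mu_c_def)
  qed
  have S1: "(\<Sum>j\<in>UNIV. val 1 j i) = 1/2 * ((1 + (real CARD('d) + 2) * sig^2) * mu_c$i)" for i
  proof -
    have "(\<Sum>j\<in>UNIV. val 1 j i) = 1/2 * (\<Sum>j\<in>UNIV. GM sig mu_c 2 1 j i)"
      by (simp add: val_def sum_distrib_left)
    then show ?thesis using sumA[OF nmc, of sig i] by simp
  qed
  have Sk: "(\<Sum>j\<in>UNIV. val k j i) = 1/4 * ((1 + 2 * sig^2) * mu_c$i)" if "k \<noteq> 1" for k i
  proof -
    have "(\<Sum>j\<in>UNIV. val k j i) = 1/4 * (\<Sum>j\<in>UNIV. mu_c$j * (GM sig mu0 1 1 j i + GM sig mu1 1 1 j i))"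
      using that by (simp add: val_def sum_distrib_left GM10s algebra_simps)
    also have "\<dots> = 1/4 * ((mu_c \<bullet> mu0) * mu0$i + (mu_c \<bullet> mu1) * mu1$i + 2 * sig^2 * mu_c$i)"
      by (simp only: sumB)
    finally show ?thesis using orth[of i] by (simp add: algebra_simps)
  qed
  have cardI: "card (I - {1}) = L - 1" using I by (simp add: I_def)
  have Lr: "real (L - 1) = real L - 1" using \<open>L \<ge> 1\<close> by (simp add: of_nat_diff)
  have SI: "(\<Sum>k\<in>I. \<Sum>j\<in>UNIV. c0 * val k j i) = c0 * (1/2 * (K * mu_c$i))" for i
  proof -
    have "(\<Sum>k\<in>I. \<Sum>j\<in>UNIV. c0 * val k j i) = c0 * (\<Sum>k\<in>I. \<Sum>j\<in>UNIV. val k j i)"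
      by (simp add: sum_distrib_left)
    also have "(\<Sum>k\<in>I. \<Sum>j\<in>UNIV. val k j i) = (\<Sum>j\<in>UNIV. val 1 j i) + (\<Sum>k\<in>I - {1}. \<Sum>j\<in>UNIV. val k j i)"
      using I by (simp add: sum.remove)
    also have "(\<Sum>k\<in>I - {1}. \<Sum>j\<in>UNIV. val k j i) = (\<Sum>k\<in>I - {1}. 1/4 * ((1 + 2 * sig^2) * mu_c$i))"
      by (intro sum.cong refl) (simp add: Sk)
    also have "\<dots> = (real L - 1) * (1/4 * ((1 + 2 * sig^2) * mu_c$i))"
      using cardI Lr by simp
    also have "(\<Sum>j\<in>UNIV. val 1 j i) + (real L - 1) * (1/4 * ((1 + 2 * sig^2) * mu_c$i)) = 1/2 * (K * mu_c$i)"
      unfolding S1 K_def by (simp add: field_simps)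
    finally show ?thesis .
  qed
  have main: "cond_exp_event P E (\<lambda>w. T_ctx lam L (\<lambda>l. snd (w l)) 1) = c0 *\<^sub>R (K *\<^sub>R mu_c)"
    unfolding cond_exp_event_def LI mE
  proof (subst vec_eq_iff, intro allI)
    fix i
    show "((1 / (1/2)) *\<^sub>R (\<Sum>i\<in>UNIV. (\<Sum>k\<in>I. \<Sum>j\<in>UNIV. c0 * val k j i) *\<^sub>R axis i 1)) $ i = (c0 *\<^sub>R (K *\<^sub>R mu_c)) $ i"
      by (simp only: vector_scaleR_component vec_axis_sum SI) simp
  qed
  have Kpos: "K > 0" unfolding K_def using \<open>L \<ge> 1\<close> by (auto intro!: add_pos_nonneg)
  show ?thesis
  proof
    show "cond_exp_event P E (\<lambda>w. T_ctx lam L (\<lambda>l. snd (w l)) 1) = (2 * lam / real L) *\<^sub>R (((1 + (real CARD('d) + 2) * sig^2) + (real L - 1) * (1/2 + sig^2)) *\<^sub>R mu_c)"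
      using main by (simp add: c0_def K_def)
    show "lam = real L / 2 * (1 / (1 + (real CARD('d) + 2) * sig^2 + (real L - 1) * (1/2 + sig^2))) \<longrightarrow> cond_exp_event P E (\<lambda>w. T_ctx lam L (\<lambda>l. snd (w l)) 1) = mu_c"
    proof
      assume "lam = real L / 2 * (1 / (1 + (real CARD('d) + 2) * sig^2 + (real L - 1) * (1/2 + sig^2)))"
      then have "lam = real L / 2 * (1 / K)" by (simp add: K_def add.assoc)
      then have "c0 * K = 1" using Kpos \<open>L \<ge> 1\<close> by (simp add: c0_def)
      then show "cond_exp_event P E (\<lambda>w. T_ctx lam L (\<lambda>l. snd (w l)) 1) = mu_c"
        using main by simp
    qed
  qed
qed

end
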